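(* For $i=1,\dots,d$ let $\{I_n^{(i)}\}_{n=1}^\infty$ be increasing sequences of symmetric integer intervals $I_n^{(i)}=[-a_n^{(i)};a_n^{(i)}]\subseteq\mathbb Z$. Then the sets $W_n=I_n^{(1)}\times\dots\times I_n^{(d)}\subseteq\mathbb Z^d$ form a $2^d$-incompressible sequence in $\mathbb Z^d$.
   Context: $[a;b]$ denotes $\{a,a+1,\dots,b\}$. In the additive group $\mathbb Z^d$, a sequence of translates $\{W_{n(i)}+f_i\}_{i=1}^I$ is incremental if $n(1)\ge\dots\ge n(I)$ and $f_i\notin\bigcup_{j<i}(W_{n(j)}+f_j)$. An increasing sequence $\{W_n\}$ of finite sets containing $0$ is $C$-incompressible if for every incremental sequence at most $C$ of the sets $W_{n(i)}+f_i$ contain $0$. *)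

theory Defs
  imports "HOL-Analysis.Analysis"
begin

text \<open>Sequences are indexed by positive naturals n = 1, 2, ...; the value W 0 is ignored.
  The translate W + f is written as the image of W under (\<lambda>w. w + f).\<close>

definition incremental ::
  "(nat \<Rightarrow> 'a::ab_group_add set) \<Rightarrow> nat \<Rightarrow> (nat \<Rightarrow> nat) \<Rightarrow> (nat \<Rightarrow> 'a) \<Rightarrow> bool" where
  "incremental W I n f \<longleftrightarrow>
     (\<forall>i\<in>{1..I}. 1 \<le> n i) \<and>
     (\<forall>i j. 1 \<le> i \<longrightarrow> i \<le> j \<longrightarrow> j \<le> I \<longrightarrow> n j \<le> n i) \<and>
     (\<forall>i\<in>{1..I}. f i \<notin> (\<Union>j\<in>{1..<i}. (\<lambda>w. w + f j) ` W (n j)))"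

definition incompressible :: "nat \<Rightarrow> (nat \<Rightarrow> 'a::ab_group_add set) \<Rightarrow> bool" where
  "incompressible C W \<longleftrightarrow>
     (\<forall>n\<ge>1. W n \<subseteq> W (Suc n)) \<and>
     (\<forall>n\<ge>1. finite (W n)) \<and>
     (\<forall>n\<ge>1. 0 \<in> W n) \<and>
     (\<forall>I n f. incremental W I n f \<longrightarrow>
        card {i\<in>{1..I}. 0 \<in> (\<lambda>w. w + f i) ` W (n i)} \<le> C)"

end

theory Submission
  imports Defs
begin

lemma box_finite:
  fixes b :: "'d::finite \<Rightarrow> int"
  shows "finite {x :: int ^ 'd. \<forall>i. \<bar>x $ i\<bar> \<le> b i}"
proof -
  have "{x :: int ^ 'd. \<forall>i. \<bar>x $ i\<bar> \<le> b i} \<subseteq> vec_lambda ` (PiE UNIV (\<lambda>i. {-b i..b i}))"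
  proof
    fix x :: "int ^ 'd" assume "x \<in> {x. \<forall>i. \<bar>x $ i\<bar> \<le> b i}"
    then have "(\<lambda>i. x $ i) \<in> PiE UNIV (\<lambda>i. {-b i..b i})" by (force simp: abs_le_iff)
    moreover have "x = vec_lambda (\<lambda>i. x $ i)" by simp
    ultimately show "x \<in> vec_lambda ` (PiE UNIV (\<lambda>i. {-b i..b i}))" by blast
  qed
  moreover have "finite (PiE UNIV (\<lambda>i. {-b i..b i}))" by (intro finite_PiE) auto
  ultimately show ?thesis using finite_subset by blast
qed

theorem proposition2p5:
  fixes a :: "'d::finite \<Rightarrow> nat \<Rightarrow> nat"
  assumes "\<And>i n. 1 \<le> n \<Longrightarrow> a i n \<le> a i (Suc n)"
  shows "incompressible (2 ^ CARD('d))
           (\<lambda>n. {x :: int ^ 'd. \<forall>i. \<bar>x $ i\<bar> \<le> int (a i n)})"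
proof -
  define W where "W = (\<lambda>n. {x :: int ^ 'd. \<forall>i. \<bar>x $ i\<bar> \<le> int (a i n)})"
  have mono: "a k m \<le> a k (m + e)" if "1 \<le> m" for k m e
  proof (induction e)
    case (Suc e)
    then show ?case using assms[of "m + e" k] that by simp
  qed simp
  have mono2: "a k p \<le> a k q" if "1 \<le> p" "p \<le> q" for k p q
    using mono[of p k "q - p"] that by simp
  have main: "card {i\<in>{1..I}. 0 \<in> (\<lambda>w. w + f i) ` W (n i)} \<le> 2 ^ CARD('d)"
    if inc: "incremental W I n f" for I n f
  proof -
    define S where "S = {i\<in>{1..I}. 0 \<in> (\<lambda>w. w + f i) ` W (n i)}"
    have inS: "\<bar>f i $ k\<bar> \<le> int (a k (n i))" if "i \<in> S" for i k
    proof -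
      from that obtain w where "w \<in> W (n i)" "0 = w + f i" unfolding S_def by auto
      then have "w = - f i" by (simp add: eq_neg_iff_add_eq_0)
      with \<open>w \<in> W (n i)\<close> show ?thesis unfolding W_def by auto
    qed
    define g where "g = (\<lambda>i. {k. f i $ k > 0})"
    have "inj_on g S"
    proof (rule inj_onI)
      have key: "False" if "i \<in> S" "j \<in> S" "i < j" "g i = g j" for i j
      proof -
        have ij: "1 \<le> i" "j \<le> I" using that unfolding S_def by auto
        have nle: "n j \<le> n i" and n1: "1 \<le> n j"
          using inc ij that(3) unfolding incremental_def by auto
        have "f j \<notin> (\<lambda>w. w + f i) ` W (n i)"
          using inc ij that(3) unfolding incremental_def by auto
        then have "f j - f i \<notin> W (n i)"
          by (metis (no_types, lifting) diff_add_cancel image_eqI)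
        then obtain k where k: "\<bar>(f j - f i) $ k\<bar> > int (a k (n i))"
          unfolding W_def by (auto simp: not_le)
        have A: "\<bar>f i $ k\<bar> \<le> int (a k (n i))" using inS[OF that(1)] .
        have "\<bar>f j $ k\<bar> \<le> int (a k (n j))" using inS[OF that(2)] .
        also have "\<dots> \<le> int (a k (n i))" using mono2[OF n1 nle] by simp
        finally have B: "\<bar>f j $ k\<bar> \<le> int (a k (n i))" .
        have "(f i $ k > 0) = (f j $ k > 0)" using that(4) unfolding g_def by blast
        then show False using A B k by auto
      qed
      fix i j assume "i \<in> S" "j \<in> S" "g i = g j"
      then show "i = j" using key[of i j] key[of j i] by (metis linorder_neqE_nat)
    qed
    then have "card S = card (g ` S)" by (simp add: card_image)
    also have "\<dots> \<le> card (Pow (UNIV :: 'd set))" by (intro card_mono) auto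
    also have "\<dots> = 2 ^ CARD('d)" by (simp add: card_Pow)
    finally show ?thesis unfolding S_def .
  qed
  have "\<forall>n\<ge>1. W n \<subseteq> W (Suc n)"
    unfolding W_def using assms by (auto intro: order_trans)
  moreover have "\<forall>n\<ge>1. finite (W n)" unfolding W_def using box_finite[of "\<lambda>i. int (a i _)"] by blast
  moreover have "\<forall>n\<ge>1. 0 \<in> W n" unfolding W_def by simp
  ultimately have "incompressible (2 ^ CARD('d)) W"
    unfolding incompressible_def using main by blast
  then show ?thesis unfolding W_def .
qed

end
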